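(* Let $S=\{a+b\sqrt2 : a,b\in\mathbb Z_{\ge0},\ (a,b)\neq(0,0)\}$, a semiring (closed under addition and multiplication). Then: (i) the only invertible element of $S$ is $1$; (ii) $7(5+2\sqrt2)=(3+8\sqrt2)(1+2\sqrt2)$, and the four elements $7$, $5+2\sqrt2$, $3+8\sqrt2$, $1+2\sqrt2$ are all prime (irreducible) in $S$; (iii) Pythagorean proportionality in $S$ is not transitive; (iv) $7(5+2\sqrt2)$ and $7(1+2\sqrt2)$ have no algebraic gcd in $S$.
   Context: In the multiplicative monoid $S$, $u$ divides $w$ if $w=uz$ for some $z\in S$; a non-unit element is prime (irreducible) if its only divisors in $S$ are $1$ and itself. Pythagorean proportionality in $S$: $a:b=c:d$ if there exist $x,y,m,n\in S$ with $a=mx$, $b=nx$, $c=my$, $d=ny$. An algebraic gcd of $a,b\in S$ is a common divisor of $a$ and $b$ in $S$ that is divisible (in $S$) by every common divisor of $a$ and $b$ in $S$. *)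

theory Defs
  imports Complex_Main
begin

definition S :: "real set" where
  "S = {real a + real b * sqrt 2 | a b :: nat. (a, b) \<noteq> (0, 0)}"

definition sdvd :: "real \<Rightarrow> real \<Rightarrow> bool" where
  "sdvd u w \<longleftrightarrow> (\<exists>z\<in>S. w = u * z)"

definition sunit :: "real \<Rightarrow> bool" where
  "sunit x \<longleftrightarrow> x \<in> S \<and> (\<exists>y\<in>S. x * y = 1)"

definition sprime :: "real \<Rightarrow> bool" where
  "sprime p \<longleftrightarrow> p \<in> S \<and> \<not> sunit p \<and> (\<forall>u\<in>S. sdvd u p \<longrightarrow> u = 1 \<or> u = p)"

definition sprop :: "real \<Rightarrow> real \<Rightarrow> real \<Rightarrow> real \<Rightarrow> bool" where
  "sprop a b c d \<longleftrightarrow> (\<exists>x\<in>S. \<exists>y\<in>S. \<exists>m\<in>S. \<exists>n\<in>S.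
      a = m * x \<and> b = n * x \<and> c = m * y \<and> d = n * y)"

definition is_sgcd :: "real \<Rightarrow> real \<Rightarrow> real \<Rightarrow> bool" where
  "is_sgcd g a b \<longleftrightarrow> g \<in> S \<and> sdvd g a \<and> sdvd g b \<and>
      (\<forall>c\<in>S. sdvd c a \<and> sdvd c b \<longrightarrow> sdvd c g)"

end

theory Submission imports Defs begin

lemma no_sq2: "(x::nat)^2 = 2 * y^2 \<Longrightarrow> y = 0"
proof (induction x arbitrary: y rule: less_induct)
  case (less x)
  show ?case
  proof (cases "x = 0")
    case True thus ?thesis using less.prems by simp
  next
    case False
    have "even (x^2)" using less.prems by simp
    hence "even x" by simp
    then obtain k where k: "x = 2*k" by blast
    hence "y^2 = 2*k^2" using less.prems by (simp add: power2_eq_square)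
    hence "even (y^2)" by simp
    hence "even y" by simp
    then obtain m where m: "y = 2*m" by blast
    have "k^2 = 2*m^2" using \<open>y^2 = 2*k^2\<close> m by (simp add: power2_eq_square)
    moreover have "k < x" using k False by simp
    ultimately have "m = 0" using less.IH by blast
    thus ?thesis using m by simp
  qed
qed

lemma sqrt2_nat: "sqrt 2 * real k = real m \<Longrightarrow> k = 0"
proof -
  assume h: "sqrt 2 * real k = real m"
  hence "(sqrt 2 * real k)^2 = (real m)^2" by simp
  hence "2 * (real k)^2 = (real m)^2" by (simp add: power_mult_distrib)
  hence "real (m^2) = real (2 * k^2)" by simp
  hence "m^2 = 2*k^2" by linarith
  thus ?thesis by (rule no_sq2)
qed

lemma rep_inj: "real a + real b * sqrt 2 = real c + real d * sqrt 2 \<Longrightarrow> a = c \<and> b = d"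
proof -
  assume h: "real a + real b * sqrt 2 = real c + real d * sqrt 2"
  have bd: "b = d"
  proof (rule ccontr)
    assume "b \<noteq> d"
    hence "b < d \<or> d < b" by arith
    thus False
    proof
      assume "b < d"
      have "sqrt 2 * real (d - b) = real a - real c" using h \<open>b<d\<close> by (simp add: of_nat_diff algebra_simps)
      moreover have "sqrt 2 * real (d - b) \<ge> 0" by simp
      ultimately have "c \<le> a" by simp
      hence "sqrt 2 * real (d - b) = real (a - c)" using \<open>sqrt 2 * real (d - b) = real a - real c\<close> by (simp add: of_nat_diff)
      hence "d - b = 0" by (rule sqrt2_nat)
      thus False using \<open>b<d\<close> by simp
    next
      assume "d < b"
      have "sqrt 2 * real (b - d) = real c - real a" using h \<open>d<b\<close> by (simp add: of_nat_diff algebra_simps)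
      moreover have "sqrt 2 * real (b - d) \<ge> 0" by simp
      ultimately have "a \<le> c" by simp
      hence "sqrt 2 * real (b - d) = real (c - a)" using \<open>sqrt 2 * real (b - d) = real c - real a\<close> by (simp add: of_nat_diff)
      hence "b - d = 0" by (rule sqrt2_nat)
      thus False using \<open>d<b\<close> by simp
    qed
  qed
  thus ?thesis using h by simp
qed

lemma mult_rep: "(real a + real b * sqrt 2) * (real c + real d * sqrt 2)
   = real (a*c + 2*b*d) + real (a*d + b*c) * sqrt 2"
proof -
  have "sqrt 2 * sqrt 2 = (2::real)" by simp
  thus ?thesis by (simp add: algebra_simps)
qed

lemma fact_pos:
  assumes "c*e + 2*d*f = (a::nat)" "odd a"
  shows "c > 0" "e > 0"
proof -
  show "c > 0"
  proof (rule ccontr)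
    assume "\<not> c > 0" hence "a = 2*(d*f)" using assms(1) by simp
    thus False using assms(2) by simp
  qed
  show "e > 0"
  proof (rule ccontr)
    assume "\<not> e > 0" hence "a = 2*(d*f)" using assms(1) by simp
    thus False using assms(2) by simp
  qed
qed

lemma fact_cop:
  assumes "c*e + 2*d*f = (a::nat)" "c*f + d*e = b" "gcd a b = 1"
  shows "d = 0 \<Longrightarrow> c = 1" "f = 0 \<Longrightarrow> e = 1"
proof -
  assume "d = 0"
  hence "c dvd a" "c dvd b" using assms by auto
  hence "c dvd gcd a b" by simp
  thus "c = 1" using assms(3) by simp
next
  assume "f = 0"
  hence "e dvd a" "e dvd b" using assms by auto
  hence "e dvd gcd a b" by simp
  thus "e = 1" using assms(3) by simp
qed

lemma both_pos: "(x::nat) > 0 \<Longrightarrow> y > 0 \<Longrightarrow> x*y \<ge> 1"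
  by (simp add: Suc_le_eq)

lemma fact2:
  assumes "c*e + 2*d*f = (a::nat)" "c*f + d*e = 2" "c > 0" "d > 0" "e > 0" "f > 0"
  shows "a = 3"
proof -
  have "c*f \<ge> 1" "d*e \<ge> 1" using assms both_pos by auto
  hence "c*f = 1" "d*e = 1" using assms(2) by linarith+
  hence "c = 1" "d = 1" "e = 1" "f = 1" by auto
  thus ?thesis using assms(1) by simp
qed

lemma factq:
  assumes "c*e + 2*d*f = (5::nat)" "c*f + d*e = 2" "(c,d) \<noteq> (0,0)" "(e,f) \<noteq> (0,0)"
  shows "(c = 1 \<and> d = 0) \<or> (e = 1 \<and> f = 0)"
proof -
  have p: "c > 0" "e > 0" using fact_pos[OF assms(1)] by auto
  have g: "gcd (5::nat) 2 = 1" by simp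
  note cp = fact_cop[OF assms(1,2) g]
  show ?thesis
  proof (cases "d = 0")
    case True thus ?thesis using cp by simp
  next
    case False
    show ?thesis
    proof (cases "f = 0")
      case True thus ?thesis using cp by simp
    next
      case f: False
      have "(5::nat) = 3" using fact2[OF assms(1,2)] p False f by simp
      thus ?thesis by simp
    qed
  qed
qed

lemma facts:
  assumes "c*e + 2*d*f = (1::nat)" "c*f + d*e = 2" "(c,d) \<noteq> (0,0)" "(e,f) \<noteq> (0,0)"
  shows "(c = 1 \<and> d = 0) \<or> (e = 1 \<and> f = 0)"
proof -
  have p: "c > 0" "e > 0" using fact_pos[OF assms(1)] by auto
  have g: "gcd (1::nat) 2 = 1" by simp
  note cp = fact_cop[OF assms(1,2) g]
  show ?thesis
  proof (cases "d = 0")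
    case True thus ?thesis using cp by simp
  next
    case False
    show ?thesis
    proof (cases "f = 0")
      case True thus ?thesis using cp by simp
    next
      case f: False
      have "(1::nat) = 3" using fact2[OF assms(1,2)] p False f by simp
      thus ?thesis by simp
    qed
  qed
qed

lemma factr:
  assumes "c*e + 2*d*f = (3::nat)" "c*f + d*e = 8" "(c,d) \<noteq> (0,0)" "(e,f) \<noteq> (0,0)"
  shows "(c = 1 \<and> d = 0) \<or> (e = 1 \<and> f = 0)"
proof -
  have p: "c > 0" "e > 0" using fact_pos[OF assms(1)] by auto
  have g: "gcd (3::nat) 8 = 1" by (simp add: gcd_non_0_nat)
  note cp = fact_cop[OF assms(1,2) g]
  show ?thesis
  proof (cases "d = 0")
    case True thus ?thesis using cp by simp
  next
    case False
    show ?thesis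
    proof (cases "f = 0")
      case True thus ?thesis using cp by simp
    next
      case f: False
      have "c*e \<ge> 1" "d*f \<ge> 1" using p False f both_pos by auto
      hence "c*e = 1" "d*f = 1" using assms(1) by linarith+
      hence "c = 1" "d = 1" "e = 1" "f = 1" by auto
      thus ?thesis using assms(2) by simp
    qed
  qed
qed

lemma div7: "(x::nat) dvd 7 \<Longrightarrow> x = 1 \<or> x = 7"
proof -
  assume h: "x dvd 7"
  hence "x \<le> 7" "x > 0" using dvd_imp_le by (auto intro: Nat.gr0I)
  hence "x \<in> {1,2,3,4,5,6,7}" by auto
  thus ?thesis using h by auto
qed

lemma fact7:
  assumes "c*e + 2*d*f = (7::nat)" "c*f + d*e = 0" "(c,d) \<noteq> (0,0)" "(e,f) \<noteq> (0,0)"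
  shows "(c = 1 \<and> d = 0) \<or> (e = 1 \<and> f = 0)"
proof -
  have p: "c > 0" "e > 0" using fact_pos[OF assms(1)] by auto
  hence "f = 0" "d = 0" using assms(2) by auto
  hence ce: "c*e = 7" using assms(1) by simp
  hence "c dvd 7" by (metis dvd_triv_left)
  hence "c = 1 \<or> c = 7" by (rule div7)
  thus ?thesis using ce \<open>f = 0\<close> \<open>d = 0\<close> by auto
qed

lemma S_iff: "x \<in> S \<longleftrightarrow> (\<exists>a b. (a,b) \<noteq> (0,0) \<and> x = real a + real b * sqrt 2)"
  unfolding S_def by auto

lemma S_mult: assumes "x \<in> S" "y \<in> S" shows "x * y \<in> S"
proof -
  obtain a b where ab: "(a,b) \<noteq> (0,0)" "x = real a + real b * sqrt 2" using assms(1) S_iff by auto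
  obtain c d where cd: "(c,d) \<noteq> (0,0)" "y = real c + real d * sqrt 2" using assms(2) S_iff by auto
  have "(a*c + 2*b*d, a*d + b*c) \<noteq> (0,0)" using ab(1) cd(1) by auto
  thus ?thesis unfolding S_iff using ab(2) cd(2) mult_rep by blast
qed

lemma one_S: "1 \<in> S"
  unfolding S_iff by (rule exI[of _ 1], rule exI[of _ 0]) simp

lemma sunit_iff: "sunit x \<longleftrightarrow> x = 1"
proof
  assume "sunit x"
  then obtain y where xy: "x \<in> S" "y \<in> S" "x * y = 1" unfolding sunit_def by auto
  obtain a b where ab: "(a,b) \<noteq> (0,0)" "x = real a + real b * sqrt 2" using xy(1) S_iff by auto
  obtain c d where cd: "(c,d) \<noteq> (0,0)" "y = real c + real d * sqrt 2" using xy(2) S_iff by auto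
  have "real (a*c + 2*b*d) + real (a*d + b*c) * sqrt 2 = real 1 + real 0 * sqrt 2"
    using xy(3) ab(2) cd(2) mult_rep by simp
  from rep_inj[OF this] have e: "a*c + 2*(b*d) = 1" "a*d + b*c = 0" by auto
  have "b*d = 0"
  proof (rule ccontr)
    assume "b*d \<noteq> 0" hence "b*d \<ge> 1" by simp
    thus False using e(1) by linarith
  qed
  hence "a*c = 1" using e(1) by (metis add.right_neutral mult_0_right)
  hence "a = 1" "c = 1" by auto
  hence "b = 0" using e(2) by simp
  thus "x = 1" using ab(2) \<open>a = 1\<close> by simp
next
  assume "x = 1" thus "sunit x" unfolding sunit_def using one_S by auto
qed

lemma sprime_of:
  assumes "(a,b) \<noteq> (0,0)" "(a,b) \<noteq> (1,0)"
    and P: "\<And>c d e f. c*e + 2*d*f = a \<Longrightarrow> c*f + d*e = b \<Longrightarrow> (c,d) \<noteq> (0,0) \<Longrightarrow> (e,f) \<noteq> (0,0)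
        \<Longrightarrow> (c = 1 \<and> d = 0) \<or> (e = 1 \<and> f = 0)"
  shows "sprime (real a + real b * sqrt 2)"
  unfolding sprime_def sunit_iff
proof (intro conjI ballI impI)
  show "real a + real b * sqrt 2 \<in> S" unfolding S_iff using assms(1) by blast
  show "real a + real b * sqrt 2 \<noteq> 1"
  proof
    assume "real a + real b * sqrt 2 = 1"
    hence "real a + real b * sqrt 2 = real 1 + real 0 * sqrt 2" by simp
    from rep_inj[OF this] show False using assms(2) by simp
  qed
  fix u assume u: "u \<in> S" and "sdvd u (real a + real b * sqrt 2)"
  then obtain z where z: "z \<in> S" "real a + real b * sqrt 2 = u * z" unfolding sdvd_def by auto
  obtain c d where cd: "(c,d) \<noteq> (0,0)" "u = real c + real d * sqrt 2" using u S_iff by auto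
  obtain e f where ef: "(e,f) \<noteq> (0,0)" "z = real e + real f * sqrt 2" using z(1) S_iff by auto
  have "real a + real b * sqrt 2 = real (c*e + 2*d*f) + real (c*f + d*e) * sqrt 2"
    using z(2) cd(2) ef(2) mult_rep by simp
  from rep_inj[OF this] have "c*e + 2*d*f = a" "c*f + d*e = b" by auto
  from P[OF this cd(1) ef(1)] show "u = 1 \<or> u = real a + real b * sqrt 2"
    using z(2) cd(2) ef(2) by auto
qed

lemma sqrt2_bounds: "1 < sqrt (2::real)" "sqrt 2 < 2"
  using sqrt2_less_2 by auto

lemma ident: "7 * (5 + 2 * sqrt 2) = (3 + 8 * sqrt 2) * (1 + 2 * sqrt (2::real))"
proof -
  have "sqrt 2 * sqrt 2 = (2::real)" by simp
  thus ?thesis by (simp add: algebra_simps)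
qed

lemma p7: "sprime 7"
  using sprime_of[of 7 0] fact7 by simp
lemma pq: "sprime (5 + 2 * sqrt 2)"
  using sprime_of[of 5 2] factq by simp
lemma pr: "sprime (3 + 8 * sqrt 2)"
  using sprime_of[of 3 8] factr by simp
lemma ps: "sprime (1 + 2 * sqrt 2)"
  using sprime_of[of 1 2] facts by simp

lemma sprime_dvd: "sprime p \<Longrightarrow> u \<in> S \<Longrightarrow> z \<in> S \<Longrightarrow> p = u * z \<Longrightarrow> u = 1 \<or> u = p"
  unfolding sprime_def sdvd_def by blast

theorem mainTheorem14:
  shows "(\<forall>x. sunit x \<longleftrightarrow> x = 1)
    \<and> (7 * (5 + 2 * sqrt 2) = (3 + 8 * sqrt 2) * (1 + 2 * sqrt 2)
       \<and> sprime 7 \<and> sprime (5 + 2 * sqrt 2) \<and> sprime (3 + 8 * sqrt 2) \<and> sprime (1 + 2 * sqrt 2))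
    \<and> \<not> (\<forall>a\<in>S. \<forall>b\<in>S. \<forall>c\<in>S. \<forall>d\<in>S. \<forall>e\<in>S. \<forall>f\<in>S.
            sprop a b c d \<and> sprop c d e f \<longrightarrow> sprop a b e f)
    \<and> \<not> (\<exists>g. is_sgcd g (7 * (5 + 2 * sqrt 2)) (7 * (1 + 2 * sqrt 2)))"
proof -
  define p :: real where "p = 7"
  define q where "q = 5 + 2 * sqrt (2::real)"
  define r where "r = 3 + 8 * sqrt (2::real)"
  define s where "s = 1 + 2 * sqrt (2::real)"
  have id: "p * q = r * s" unfolding p_def q_def r_def s_def by (rule ident)
  have P: "sprime p" "sprime q" "sprime r" "sprime s"
    unfolding p_def q_def r_def s_def using p7 pq pr ps by auto
  hence inS: "p \<in> S" "q \<in> S" "r \<in> S" "s \<in> S" unfolding sprime_def by auto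
  have ne: "p \<noteq> 1" "p \<noteq> s" "p \<noteq> r" "q \<noteq> 1" "q \<noteq> s" "s \<noteq> 1"
    unfolding p_def q_def r_def s_def using sqrt2_bounds
    by (linarith, linarith, linarith, linarith, linarith, linarith)
  have nz: "p \<noteq> 0" unfolding p_def by simp
  have part3: "\<not> (\<forall>a\<in>S. \<forall>b\<in>S. \<forall>c\<in>S. \<forall>d\<in>S. \<forall>e\<in>S. \<forall>f\<in>S.
            sprop a b c d \<and> sprop c d e f \<longrightarrow> sprop a b e f)"
  proof
    assume H: "\<forall>a\<in>S. \<forall>b\<in>S. \<forall>c\<in>S. \<forall>d\<in>S. \<forall>e\<in>S. \<forall>f\<in>S.
            sprop a b c d \<and> sprop c d e f \<longrightarrow> sprop a b e f"
    have pqS: "p*q \<in> S" "q*s \<in> S" using inS S_mult by auto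
    have 1: "sprop p s (p*q) (q*s)" unfolding sprop_def
      using inS one_S by (intro bexI[of _ 1] bexI[of _ q] bexI[of _ p] bexI[of _ s]) (auto simp: mult.commute)
    have 2: "sprop (p*q) (q*s) r q" unfolding sprop_def
      using inS one_S id by (intro bexI[of _ s] bexI[of _ 1] bexI[of _ r] bexI[of _ q]) (auto simp: mult.commute)
    have "sprop p s r q" using H inS pqS 1 2 by blast
    then obtain x y m n where xy: "x \<in> S" "y \<in> S" "m \<in> S" "n \<in> S"
      "p = m * x" "s = n * x" "r = m * y" "q = n * y" unfolding sprop_def by blast
    have "x = 1 \<or> x = p" using sprime_dvd[OF P(1) xy(1) xy(3)] xy(5) by (simp add: mult.commute)
    thus False
    proof
      assume "x = 1"
      hence "r = p * y" using xy by simp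
      hence "p = 1 \<or> p = r" using sprime_dvd[OF P(3) inS(1) xy(2)] by simp
      thus False using ne by auto
    next
      assume "x = p"
      hence "s = p * n" using xy by (simp add: mult.commute)
      hence "p = 1 \<or> p = s" using sprime_dvd[OF P(4) inS(1) xy(4)] by simp
      thus False using ne by auto
    qed
  qed
  have part4: "\<not> (\<exists>g. is_sgcd g (p * q) (p * s))"
  proof
    assume "\<exists>g. is_sgcd g (p * q) (p * s)"
    then obtain g where g: "g \<in> S" "sdvd g (p*q)" "sdvd g (p*s)"
      "\<And>c. c \<in> S \<Longrightarrow> sdvd c (p*q) \<Longrightarrow> sdvd c (p*s) \<Longrightarrow> sdvd c g"
      unfolding is_sgcd_def by blast
    have "sdvd p g" using g(4)[OF inS(1)] inS unfolding sdvd_def by blast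
    then obtain t where t: "t \<in> S" "g = p * t" unfolding sdvd_def by blast
    have "sdvd s g" using g(4)[OF inS(4)] inS id unfolding sdvd_def by (metis mult.commute)
    then obtain w where w: "w \<in> S" "g = s * w" unfolding sdvd_def by blast
    obtain z where z: "z \<in> S" "p*q = g * z" using g(2) unfolding sdvd_def by blast
    hence "q = t * z" using t nz by (simp add: mult.assoc)
    hence "t = 1 \<or> t = q" using sprime_dvd[OF P(2) t(1) z(1)] by simp
    thus False
    proof
      assume "t = 1"
      hence "p = s * w" using t w by simp
      hence "s = 1 \<or> s = p" using sprime_dvd[OF P(1) inS(4) w(1)] by simp
      thus False using ne by auto
    next
      assume "t = q"
      obtain z' where z': "z' \<in> S" "p*s = g * z'" using g(3) unfolding sdvd_def by blast
      hence "s = q * z'" using t \<open>t = q\<close> nz by (simp add: mult.assoc)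
      hence "q = 1 \<or> q = s" using sprime_dvd[OF P(4) inS(2) z'(1)] by simp
      thus False using ne by auto
    qed
  qed
  show ?thesis using sunit_iff ident p7 pq pr ps part3 part4
    unfolding p_def q_def r_def s_def by blast
qed

end
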